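(* For every $\alpha\ge1$ and $\varepsilon>0$ there is no deterministic $\alpha$-approximation algorithm for the Weighted Monotone Subset Minimization problem in the membership model which runs in time $\left(\mathrm{brute}(\alpha)-\varepsilon\right)^n\cdot n^{O(1)}$, where $n=|U|$.
   Context: A set system $\mathcal{F}\subseteq 2^U$ over a finite set $U$ is monotone if $U\in\mathcal{F}$ and whenever $T\subseteq S\subseteq U$ and $T\in\mathcal{F}$ then $S\in\mathcal{F}$. An instance of the Weighted Monotone Subset Minimization problem (WSM) is a triple $(U,w,\mathcal{F})$ with $U$ finite, $w:U\to\mathbb{N}$ and $\mathcal{F}$ a monotone set system of $U$; the goal is to find $S\in\mathcal{F}$ minimizing $w(S)=\sum_{e\in S}w(e)$; $\mathrm{opt}(U,w,\mathcal{F})=\min\{w(S)\mid S\in\mathcal{F}\}$. In the membership model the algorithm receives $U$ and $w$ as input and may query, in a single step, whether a given $S\subseteq U$ belongs to $\mathcal{F}$. An algorithm is an $\alpha$-approximation for WSM in the membership model if for every instance it returns $S\in\mathcal{F}$ with $w(S)\le\alpha\cdot\mathrm{opt}(U,w,\mathcal{F})$. For $\alpha\ge1$, $\mathrm{brute}(\alpha)=1+\exp\left(-\alpha\cdot\mathcal{H}(1/\alpha)\right)$, where $\mathcal{H}(x)=-x\ln x-(1-x)\ln(1-x)$ (with $0\ln0=0$). *)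

theory Defs
  imports Complex_Main
begin

text \<open>Binary entropy (natural log); note ln 0 = 0 in Isabelle, matching 0 ln 0 = 0.\<close>
definition entropy :: "real \<Rightarrow> real" where
  "entropy x = - x * ln x - (1 - x) * ln (1 - x)"

definition brute :: "real \<Rightarrow> real" where
  "brute \<alpha> = 1 + exp (- \<alpha> * entropy (1 / \<alpha>))"

definition monotone_sys :: "'a set \<Rightarrow> 'a set set \<Rightarrow> bool" where
  "monotone_sys U F \<longleftrightarrow> F \<subseteq> Pow U \<and> U \<in> F \<and>
     (\<forall>T S. T \<subseteq> S \<and> S \<subseteq> U \<and> T \<in> F \<longrightarrow> S \<in> F)"

definition wt :: "('a \<Rightarrow> nat) \<Rightarrow> 'a set \<Rightarrow> nat" where
  "wt w S = (\<Sum>e\<in>S. w e)"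

definition opt :: "'a set \<Rightarrow> ('a \<Rightarrow> nat) \<Rightarrow> 'a set set \<Rightarrow> nat" where
  "opt U w F = Min (wt w ` F)"

text \<open>Deterministic adaptive query strategy in the membership model:
  a decision tree whose inner nodes are membership queries.\<close>
datatype 'a dtree = Leaf "'a set" | Query "'a set" "'a dtree" "'a dtree"

fun run :: "'a set set \<Rightarrow> 'a dtree \<Rightarrow> 'a set \<times> nat" where
  "run F (Leaf S) = (S, 0)"
| "run F (Query Q t1 t2) =
     (let r = run F (if Q \<in> F then t1 else t2) in (fst r, Suc (snd r)))"

text \<open>An algorithm maps the input (n = |U|, with U = {..<n}, and the weights w)
  to a query strategy.\<close>
type_synonym algorithm = "nat \<Rightarrow> (nat \<Rightarrow> nat) \<Rightarrow> nat dtree"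

definition is_approx :: "real \<Rightarrow> algorithm \<Rightarrow> bool" where
  "is_approx \<alpha> A \<longleftrightarrow> (\<forall>n w F. monotone_sys {..<n} F \<longrightarrow>
      (let S = fst (run F (A n w)) in
        S \<in> F \<and> real (wt w S) \<le> \<alpha> * real (opt {..<n} w F)))"

text \<open>Running time at least the number of oracle queries; bound c^n * n^O(1).\<close>
definition runs_within :: "real \<Rightarrow> algorithm \<Rightarrow> bool" where
  "runs_within b A \<longleftrightarrow> (\<exists>C (d::nat) N. \<forall>n w F. n \<ge> N \<longrightarrow> monotone_sys {..<n} F \<longrightarrow>
      real (snd (run F (A n w))) \<le> C * b ^ n * (real n + 1) ^ d)"

end

theory Submission
  imports Defs "HOL-Real_Asymp.Real_Asymp"
begin

fun path :: "'a set set \<Rightarrow> 'a dtree \<Rightarrow> 'a set list" where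
  "path F (Leaf S) = []"
| "path F (Query Q t1 t2) = Q # path F (if Q \<in> F then t1 else t2)"

lemma length_path: "length (path F A) = snd (run F A)"
  by (induction A) (auto simp: Let_def)

lemma run_agree:
  "(\<forall>Q\<in>set (path F A). (Q \<in> G) = (Q \<in> F)) \<Longrightarrow> run G A = run F A"
  by (induction A) (auto simp: Let_def)

lemma core:
  fixes A :: "nat dtree" and n k t :: nat
  defines "FT \<equiv> \<lambda>T. {S. S \<subseteq> {..<n} \<and> (T \<subseteq> S \<or> t < card S)}"
  defines "F0 \<equiv> {S. S \<subseteq> {..<n} \<and> t < card S}"
  assumes good: "\<And>T. T \<subseteq> {..<n} \<Longrightarrow> card T = k \<Longrightarrow>
      fst (run (FT T) A) \<in> FT T \<and> card (fst (run (FT T) A)) \<le> t"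
  shows "n choose k \<le> (snd (run F0 A) + 1) * (t choose k)"
proof -
  define U where "U = {..<n::nat}"
  define S0 where "S0 = fst (run F0 A)"
  define Qs where "Qs = insert S0 (set (path F0 A))"
  define G where "G = {Q \<in> Qs. Q \<subseteq> U \<and> card Q \<le> t}"
  have sub: "{T. T \<subseteq> U \<and> card T = k} \<subseteq> (\<Union>Q\<in>G. {T. T \<subseteq> Q \<and> card T = k})"
  proof
    fix T assume "T \<in> {T. T \<subseteq> U \<and> card T = k}"
    hence T: "T \<subseteq> U" "card T = k" by auto
    show "T \<in> (\<Union>Q\<in>G. {T. T \<subseteq> Q \<and> card T = k})"
    proof (cases "\<forall>Q\<in>set (path F0 A). (Q \<in> FT T) = (Q \<in> F0)")
      case True
      hence "run (FT T) A = run F0 A" by (rule run_agree)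
      with good[OF T[unfolded U_def]] have "S0 \<in> FT T" "card S0 \<le> t" by (auto simp: S0_def)
      hence "S0 \<subseteq> U" "T \<subseteq> S0" by (auto simp: FT_def U_def)
      with \<open>card S0 \<le> t\<close> have "S0 \<in> G" by (auto simp: G_def Qs_def)
      with \<open>T \<subseteq> S0\<close> T show ?thesis by auto
    next
      case False
      then obtain Q where Q: "Q \<in> set (path F0 A)" "(Q \<in> FT T) \<noteq> (Q \<in> F0)" by auto
      hence "Q \<subseteq> U" "T \<subseteq> Q" "card Q \<le> t" by (auto simp: FT_def F0_def U_def)
      hence "Q \<in> G" using Q by (auto simp: G_def Qs_def)
      with \<open>T \<subseteq> Q\<close> T show ?thesis by auto
    qed
  qed
  have finG: "finite G" by (auto simp: G_def Qs_def)
  have "n choose k = card {T. T \<subseteq> U \<and> card T = k}"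
    by (simp add: n_subsets U_def)
  also have "\<dots> \<le> card (\<Union>Q\<in>G. {T. T \<subseteq> Q \<and> card T = k})"
  proof (rule card_mono[OF _ sub])
    have "\<And>Q. Q \<in> G \<Longrightarrow> finite {T. T \<subseteq> Q \<and> card T = k}"
    proof -
      fix Q assume "Q \<in> G"
      hence "finite Q" by (auto simp: G_def U_def intro: finite_subset)
      thus "finite {T. T \<subseteq> Q \<and> card T = k}" by (rule finite_subset[rotated, OF finite_Pow_iff[THEN iffD2]]) auto
    qed
    thus "finite (\<Union>Q\<in>G. {T. T \<subseteq> Q \<and> card T = k})" using finG by blast
  qed
  also have "\<dots> \<le> (\<Sum>Q\<in>G. card {T. T \<subseteq> Q \<and> card T = k})"
    by (rule card_UN_le[OF finG])
  also have "\<dots> \<le> (\<Sum>Q\<in>G. t choose k)"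
  proof (rule sum_mono)
    fix Q assume "Q \<in> G"
    hence "finite Q" "card Q \<le> t" by (auto simp: G_def U_def intro: finite_subset)
    thus "card {T. T \<subseteq> Q \<and> card T = k} \<le> t choose k"
      by (simp add: n_subsets binomial_right_mono)
  qed
  also have "\<dots> = card G * (t choose k)" by simp
  also have "card G \<le> snd (run F0 A) + 1"
  proof -
    have "card G \<le> card Qs" by (rule card_mono) (auto simp: G_def Qs_def)
    also have "\<dots> \<le> Suc (card (set (path F0 A)))" by (simp add: Qs_def card_insert_le_m1 card_insert_if)
    also have "\<dots> \<le> Suc (length (path F0 A))" by (simp add: card_length)
    finally show ?thesis by (simp add: length_path)
  qed
  hence "card G * (t choose k) \<le> (snd (run F0 A) + 1) * (t choose k)" by (rule mult_right_mono) simp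
  finally show ?thesis .
qed


lemma binom_rec: "j < n \<Longrightarrow> Suc j * (n choose Suc j) = (n - j) * (n choose j)"
  by (metis binomial_absorb_comp binomial_absorption)

lemma binom_lower:
  fixes n k :: nat assumes "0 < k" "k < n"
  shows "n ^ n \<le> (n + 1) * ((n choose k) * k ^ k * (n - k) ^ (n - k))"
proof -
  define T where "T j = (n choose j) * k ^ j * (n - k) ^ (n - j)" for j
  have rec: "T (Suc j) * (Suc j * (n - k)) = T j * ((n - j) * k)" if "j < n" for j
  proof -
    define m where "m = n - Suc j"
    have m: "n - j = Suc m" using that by (simp add: m_def)
    have "T (Suc j) * (Suc j * (n - k)) = (Suc j * (n choose Suc j)) * k ^ Suc j * (n - k) ^ Suc m"
      unfolding T_def m_def by (simp only: power_Suc mult_ac)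
    also have "\<dots> = ((n - j) * (n choose j)) * k ^ Suc j * (n - k) ^ Suc m"
      by (simp only: binom_rec[OF that])
    also have "\<dots> = T j * ((n - j) * k)"
      unfolding T_def m by (simp only: power_Suc mult_ac)
    finally show ?thesis by simp
  qed
  have up: "T j \<le> T (Suc j)" if "j < k" for j
  proof -
    define a where "a = k - Suc j"
    define b where "b = n - Suc k"
    have e1: "n - k = Suc b" and e2: "n - j = Suc (a + Suc b)" and e3: "k = Suc j + a"
      using that assms by (simp_all add: a_def b_def)
    have "Suc j * Suc b \<le> (Suc j + a) * Suc (a + Suc b)"
      by (rule mult_mono) auto
    hence "Suc j * (n - k) \<le> (n - j) * k" unfolding e1 e2 by (subst e3) (simp add: mult.commute)
    hence "T j * (Suc j * (n - k)) \<le> T j * ((n - j) * k)" by (rule mult_left_mono) simp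
    also have "\<dots> = T (Suc j) * (Suc j * (n - k))" using rec[of j] that assms by simp
    finally show ?thesis using assms by simp
  qed
  have down: "T (Suc j) \<le> T j" if "k \<le> j" "j < n" for j
  proof -
    define a where "a = j - k"
    define b where "b = n - Suc j"
    have e1: "n - k = Suc (a + b)" and e2: "n - j = Suc b" and e3: "j = k + a"
      using that assms by (simp_all add: a_def b_def)
    have "Suc b * k \<le> Suc (k + a) * Suc (a + b)"
      by (subst mult.commute, rule mult_mono) auto
    hence "(n - j) * k \<le> Suc j * (n - k)" unfolding e1 e2 using e3 by simp
    hence "T (Suc j) * (Suc j * (n - k)) \<le> T j * (Suc j * (n - k))"
      using rec[OF that(2)] by (simp add: mult_left_mono)
    thus ?thesis using assms by simp
  qed
  have le: "T j \<le> T k" if "j \<le> n" for j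
  proof (cases "j \<le> k")
    case True
    have "T (k - i) \<le> T k" if "i \<le> k" for i
      using that
    proof (induction i)
      case (Suc i)
      have "T (k - Suc i) \<le> T (Suc (k - Suc i))" by (rule up) (use Suc in auto)
      also have "Suc (k - Suc i) = k - i" using Suc by simp
      finally show ?case using Suc by simp
    qed simp
    from this[of "k - j"] True show ?thesis by simp
  next
    case False
    have "T (k + i) \<le> T k" if "k + i \<le> n" for i
      using that
    proof (induction i)
      case (Suc i)
      have "T (Suc (k + i)) \<le> T (k + i)" by (rule down) (use Suc in auto)
      thus ?case using Suc by simp
    qed simp
    from this[of "j - k"] False that show ?thesis by simp
  qed
  have "n ^ n = (k + (n - k)) ^ n" using assms by simp
  also have "\<dots> = (\<Sum>j\<le>n. T j)" unfolding binomial_ring T_def by simp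
  also have "\<dots> \<le> (\<Sum>j\<le>n. T k)" by (rule sum_mono) (use le in auto)
  also have "\<dots> = (n + 1) * T k" by simp
  finally show ?thesis by (simp add: T_def)
qed


lemma ln_prod4: fixes a c u v :: real
  assumes "0 < a" "0 < c" "0 < u" "0 < v"
  shows "ln (a * (c * u ^ i * v ^ j)) = ln a + ln c + real i * ln u + real j * ln v"
  using assms by (simp add: ln_mult ln_realpow)

lemma entropy_lower:
  fixes n k :: nat assumes "0 < k" "k < n"
  shows "exp (real n * entropy (real k / real n)) \<le> real (n + 1) * real (n choose k)"
proof -
  have nk: "real (n - k) > 0" "real k > 0" "real n > 0" using assms by auto
  have Cpos: "real (n choose k) > 0" using assms by simp
  have "real (n ^ n) \<le> real ((n + 1) * ((n choose k) * k ^ k * (n - k) ^ (n - k)))"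
    using binom_lower[OF assms] by linarith
  hence "ln (real (n ^ n)) \<le> ln (real ((n + 1) * ((n choose k) * k ^ k * (n - k) ^ (n - k))))"
  proof -
    have a: "(0::nat) < n ^ n" using assms by simp
    have b: "(0::nat) < (n + 1) * ((n choose k) * k ^ k * (n - k) ^ (n - k))" using assms by simp
    have a': "0 < real (n ^ n)" using a by (simp only: of_nat_0_less_iff)
    have b': "0 < real ((n + 1) * ((n choose k) * k ^ k * (n - k) ^ (n - k)))" using b by (simp only: of_nat_0_less_iff)
    show ?thesis using ln_le_cancel_iff[OF a' b'] \<open>real (n ^ n) \<le> _\<close> by blast
  qed
  hence L: "real n * ln n \<le> ln (real (n+1)) + ln (real (n choose k)) + real k * ln k + real (n - k) * ln (real (n - k))"
    using nk Cpos ln_prod4[of "real (n+1)" "real (n choose k)" "real k" "real (n - k)" k "n - k"]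
    by (simp only: of_nat_mult of_nat_power ln_realpow)
  have e1: "1 - real k / real n = real (n - k) / real n" using assms nk by (simp add: field_simps of_nat_diff)
  have "real n * entropy (real k / real n) = real n * ln n - real k * ln k - real (n - k) * ln (real (n - k))"
    unfolding entropy_def e1 using nk
    by (simp add: ln_div field_simps of_nat_diff less_imp_le[OF assms(2)])
  also have "\<dots> \<le> ln (real (n + 1) * real (n choose k))"
    using L Cpos by (subst ln_mult) auto
  finally have "exp (real n * entropy (real k / real n)) \<le> exp (ln (real (n + 1) * real (n choose k)))"
    by simp
  also have "\<dots> = real (n + 1) * real (n choose k)" using Cpos by simp
  finally show ?thesis .
qed

lemma entropy_upper:
  fixes \<alpha> :: real and k t :: nat
  assumes "\<alpha> \<ge> 1" "k \<le> t" "real t \<le> \<alpha> * real k"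
  shows "real (t choose k) \<le> exp (\<alpha> * entropy (1 / \<alpha>) * real k)"
proof (cases "\<alpha> = 1")
  case True
  hence "t = k" using assms by simp
  thus ?thesis using True by (simp add: entropy_def)
next
  case False
  hence a1: "\<alpha> > 1" using assms by simp
  define p where "p = 1 / \<alpha>"
  have p: "0 < p" "p < 1" using a1 by (auto simp: p_def)
  have Cpos: "real (t choose k) > 0" using assms by simp
  have "real (t choose k) * p ^ k * (1 - p) ^ (t - k) \<le> (\<Sum>j\<le>t. real (t choose j) * p ^ j * (1 - p) ^ (t - j))"
    by (rule member_le_sum[where f = "\<lambda>j. real (t choose j) * p ^ j * (1 - p) ^ (t - j)"]) (use assms p in auto)
  also have "\<dots> = (p + (1 - p)) ^ t" by (subst binomial_ring) simp
  also have "\<dots> = 1" by simp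
  finally have "ln (real (t choose k) * p ^ k * (1 - p) ^ (t - k)) \<le> 0"
    using Cpos p by (subst ln_le_zero_iff) auto
  hence L: "ln (real (t choose k)) + real k * ln p + real (t - k) * ln (1 - p) \<le> 0"
    using Cpos p by (simp add: ln_mult ln_realpow del: of_nat_diff)
  have lp: "ln p = - ln \<alpha>" using a1 by (simp add: p_def ln_div)
  have l1p: "ln (1 - p) = ln (\<alpha> - 1) - ln \<alpha>"
  proof -
    have "1 - p = (\<alpha> - 1) / \<alpha>" using a1 by (simp add: p_def field_simps)
    thus ?thesis using a1 by (simp add: ln_div)
  qed
  have neg: "ln (1 - p) \<le> 0" using p by simp
  have tk: "real (t - k) \<le> (\<alpha> - 1) * real k" using assms by (simp add: of_nat_diff algebra_simps)
  have "ln (real (t choose k)) \<le> real k * ln \<alpha> - real (t - k) * ln (1 - p)"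
    using L lp by simp
  also have "\<dots> \<le> real k * ln \<alpha> - (\<alpha> - 1) * real k * ln (1 - p)"
    using mult_right_mono_neg[OF tk neg] by simp
  also have "\<dots> = \<alpha> * entropy (1 / \<alpha>) * real k"
    unfolding entropy_def p_def[symmetric] l1p lp
    using a1 by (simp add: p_def field_simps)
  finally show ?thesis using Cpos by (metis exp_le_cancel_iff exp_ln)
qed


lemma c_ge_ln: assumes "\<alpha> \<ge> 1" shows "ln \<alpha> \<le> \<alpha> * entropy (1 / \<alpha>)"
proof -
  have "(\<alpha> - 1) * ln (1 - 1 / \<alpha>) \<le> 0"
  proof (cases "\<alpha> = 1")
    case False
    hence "ln (1 - 1 / \<alpha>) \<le> 0" using assms by (subst ln_le_zero_iff) (auto simp: field_simps)
    thus ?thesis using assms by (simp add: mult_nonneg_nonpos)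
  qed simp
  moreover have "\<alpha> * entropy (1 / \<alpha>) = ln \<alpha> - (\<alpha> - 1) * ln (1 - 1 / \<alpha>)"
    using assms by (simp add: entropy_def ln_div field_simps)
  ultimately show ?thesis by simp
qed

lemma choose_x:
  fixes \<alpha> \<beta> :: real
  assumes "\<alpha> \<ge> 1" "0 < \<beta>" "\<beta> < brute \<alpha>"
  shows "\<exists>p q :: nat. 0 < p \<and> p < q \<and> \<alpha> * real p < real q \<and>
     ln \<beta> < entropy (real p / real q) - \<alpha> * entropy (1 / \<alpha>) * (real p / real q)"
proof -
  define c where "c = \<alpha> * entropy (1 / \<alpha>)"
  define x0 where "x0 = 1 / (1 + exp c)"
  define f where "f x = entropy x - c * x" for x
  have ep: "0 < 1 + exp c" by (simp add: add_pos_pos)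
  have x0: "0 < x0" "x0 < 1" using ep by (auto simp: x0_def field_simps)
  have "exp (ln \<alpha>) \<le> exp c" using c_ge_ln[OF assms(1)] by (simp add: c_def)
  hence "\<alpha> \<le> exp c" using assms by simp
  hence ax0: "\<alpha> * x0 < 1" using ep by (simp add: x0_def divide_less_eq)
  have fx0: "f x0 = ln (brute \<alpha>)"
  proof -
    have e1: "1 - x0 = exp c / (1 + exp c)" using ep by (simp add: x0_def field_simps)
    have l1: "ln x0 = - ln (1 + exp c)" by (simp add: x0_def ln_div)
    have l2: "ln (1 - x0) = c - ln (1 + exp c)" unfolding e1 using ep by (simp add: ln_div)
    have b: "brute \<alpha> = (1 + exp c) / exp c" using ep by (simp add: brute_def c_def exp_minus field_simps)
    have "f x0 = ln (1 + exp c) - c"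
      unfolding f_def entropy_def l1 l2 by (simp add: algebra_simps)
    also have "\<dots> = ln (brute \<alpha>)" unfolding b using ep by (simp add: ln_div)
    finally show ?thesis .
  qed
  have "isCont f x0" unfolding f_def entropy_def using x0
    by (auto intro!: continuous_intros isCont_ln_pos)
  hence "(f \<longlongrightarrow> f x0) (at x0)" by (simp add: isCont_def)
  moreover have "ln \<beta> < f x0" using assms fx0 by simp
  ultimately have "eventually (\<lambda>x. ln \<beta> < f x) (at x0)" by (rule order_tendstoD(1))
  then obtain d where d: "d > 0" "\<And>x. x \<noteq> x0 \<Longrightarrow> dist x x0 < d \<Longrightarrow> ln \<beta> < f x"
    unfolding eventually_at by auto
  obtain r where r: "r \<in> \<rat>" "max (x0 - d) 0 < r" "r < x0"
    using Rats_dense_in_real[of "max (x0 - d) 0" x0] x0 d by auto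
  obtain p q where pq: "q \<noteq> 0" "\<bar>r\<bar> = real p / real q"
    using Rats_abs_nat_div_natE[OF r(1)] by metis
  have rpq: "r = real p / real q" using pq r by simp
  have "0 < p" using r rpq pq by (auto intro: Nat.gr0I)
  moreover have "p < q"
  proof -
    have "r < 1" using r x0 by simp
    hence "real p < real q" using pq by (simp add: rpq field_simps)
    thus ?thesis by simp
  qed
  moreover have "\<alpha> * real p < real q"
  proof -
    have "\<alpha> * r < \<alpha> * x0" using r assms by (intro mult_strict_left_mono) auto
    hence "\<alpha> * r < 1" using ax0 by linarith
    thus ?thesis using pq by (simp add: rpq field_simps)
  qed
  moreover have "ln \<beta> < f r" using d r by (auto simp: dist_real_def)
  ultimately show ?thesis unfolding f_def c_def rpq by blast
qed

lemma exp_beats_poly: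
  fixes D K :: real and e :: nat assumes "D > 0"
  shows "\<exists>X. \<forall>x\<ge>X. K * (x + 1) ^ e < exp (D * x)"
proof -
  have "((\<lambda>x::real. (x + 1) ^ e / exp (D * x)) \<longlongrightarrow> 0) at_top" using assms by real_asymp
  hence "eventually (\<lambda>x. (x + 1) ^ e / exp (D * x) < 1 / (\<bar>K\<bar> + 1)) at_top"
    by (rule order_tendstoD(2)) (simp add: add_pos_nonneg)
  hence "eventually (\<lambda>x. (x + 1) ^ e / exp (D * x) < 1 / (\<bar>K\<bar> + 1) \<and> x \<ge> 0) at_top"
    by (intro eventually_conj eventually_ge_at_top)
  hence "eventually (\<lambda>x. K * (x + 1) ^ e < exp (D * x)) at_top"
  proof (rule eventually_mono)
    fix x :: real assume h: "(x + 1) ^ e / exp (D * x) < 1 / (\<bar>K\<bar> + 1) \<and> x \<ge> 0"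
    have y: "(x + 1) ^ e \<ge> 0" using h by simp
    have "(x + 1) ^ e * (\<bar>K\<bar> + 1) < exp (D * x)"
      using h by (simp add: field_simps add_pos_nonneg)
    moreover have "K * (x + 1) ^ e \<le> (x + 1) ^ e * (\<bar>K\<bar> + 1)"
    proof -
      have "K * (x + 1) ^ e \<le> \<bar>K\<bar> * (x + 1) ^ e" using y by (intro mult_right_mono) auto
      also have "\<dots> \<le> (\<bar>K\<bar> + 1) * (x + 1) ^ e" using y by (intro mult_right_mono) auto
      finally show ?thesis by (simp add: mult.commute)
    qed
    ultimately show "K * (x + 1) ^ e < exp (D * x)" by linarith
  qed
  thus ?thesis by (simp add: eventually_at_top_linorder)
qed

theorem corollary2p2:
  fixes \<alpha> \<epsilon> :: real
  assumes "\<alpha> \<ge> 1" and "\<epsilon> > 0"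
  shows "\<not> (\<exists>A. is_approx \<alpha> A \<and> runs_within (brute \<alpha> - \<epsilon>) A)"
proof
  assume "\<exists>A. is_approx \<alpha> A \<and> runs_within (brute \<alpha> - \<epsilon>) A"
  then obtain A where apx: "is_approx \<alpha> A" and rw: "runs_within (brute \<alpha> - \<epsilon>) A" by blast
  define b where "b = brute \<alpha> - \<epsilon>"
  obtain C d N where CdN: "\<And>n w F. n \<ge> N \<Longrightarrow> monotone_sys {..<n} F \<Longrightarrow>
      real (snd (run F (A n w))) \<le> C * b ^ n * (real n + 1) ^ d"
    using rw unfolding runs_within_def b_def by blast
  have kt0: "k \<le> nat \<lfloor>\<alpha> * real k\<rfloor>" for k :: nat
  proof (rule le_nat_floor)
    show "real k \<le> \<alpha> * real k" using mult_right_mono[of 1 \<alpha> "real k"] assms by simp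
  qed
  have key: "real (n choose k) \<le> (C * b ^ n * (real n + 1) ^ d + 1) * real (nat \<lfloor>\<alpha> * real k\<rfloor> choose k)"
    if nN: "n \<ge> N" and tn: "nat \<lfloor>\<alpha> * real k\<rfloor> < n" for n k
  proof -
    define t where "t = nat \<lfloor>\<alpha> * real k\<rfloor>"
    have kt: "k \<le> t" unfolding t_def by (rule kt0)
    define w where "w = (\<lambda>_::nat. 1::nat)"
    define FT where "FT = (\<lambda>T. {S. S \<subseteq> {..<n} \<and> (T \<subseteq> S \<or> t < card S)})"
    define F0 where "F0 = {S. S \<subseteq> {..<n} \<and> t < card S}"
    have wtc: "wt w = card" by (rule ext) (simp add: wt_def w_def)
    have good: "fst (run (FT T) (A n w)) \<in> FT T \<and> card (fst (run (FT T) (A n w))) \<le> t"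
      if T: "T \<subseteq> {..<n}" "card T = k" for T
    proof -
      have mono: "monotone_sys {..<n} (FT T)"
        unfolding monotone_sys_def
      proof (intro conjI allI impI)
        show "FT T \<subseteq> Pow {..<n}" by (auto simp: FT_def)
        show "{..<n} \<in> FT T" using T by (auto simp: FT_def)
        fix T' S assume h: "T' \<subseteq> S \<and> S \<subseteq> {..<n} \<and> T' \<in> FT T"
        have "finite S" using h finite_subset by blast
        hence "card T' \<le> card S" using h card_mono by blast
        thus "S \<in> FT T" using h by (auto simp: FT_def)
      qed
      have optk: "opt {..<n} w (FT T) = k"
      proof -
        have fin: "finite (FT T)" by (rule finite_subset[of _ "Pow {..<n}"]) (auto simp: FT_def)
        have "T \<in> FT T" using T by (auto simp: FT_def)
        moreover have "k \<le> card S" if "S \<in> FT T" for S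
        proof -
          have fS: "finite S" using that finite_subset by (auto simp: FT_def)
          show ?thesis
          proof (cases "T \<subseteq> S")
            case True
            thus ?thesis using card_mono[OF fS True] T by simp
          next
            case False
            thus ?thesis using that kt by (auto simp: FT_def)
          qed
        qed
        ultimately show ?thesis unfolding opt_def wtc
          by (intro Min_eqI) (use fin T in auto)
      qed
      have "fst (run (FT T) (A n w)) \<in> FT T \<and>
          real (wt w (fst (run (FT T) (A n w)))) \<le> \<alpha> * real (opt {..<n} w (FT T))"
        using apx mono unfolding is_approx_def Let_def by blast
      hence "fst (run (FT T) (A n w)) \<in> FT T" "real (card (fst (run (FT T) (A n w)))) \<le> \<alpha> * real k"
        unfolding optk wtc by auto
      thus ?thesis unfolding t_def using le_nat_floor by blast
    qed
    have c: "n choose k \<le> (snd (run F0 (A n w)) + 1) * (t choose k)"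
      unfolding F0_def by (rule core) (use good in \<open>auto simp: FT_def\<close>)
    have "monotone_sys {..<n} F0"
      unfolding monotone_sys_def
    proof (intro conjI allI impI)
      show "F0 \<subseteq> Pow {..<n}" by (auto simp: F0_def)
      show "{..<n} \<in> F0" using tn by (auto simp: F0_def t_def)
      fix T' S assume h: "T' \<subseteq> S \<and> S \<subseteq> {..<n} \<and> T' \<in> F0"
      have "finite S" using h finite_subset by blast
      hence "card T' \<le> card S" using h card_mono by blast
      thus "S \<in> F0" using h by (auto simp: F0_def)
    qed
    hence r: "real (snd (run F0 (A n w))) \<le> C * b ^ n * (real n + 1) ^ d" using CdN nN by blast
    have "real (n choose k) \<le> (real (snd (run F0 (A n w))) + 1) * real (t choose k)"
      using c by (metis of_nat_add of_nat_le_iff of_nat_mult of_nat_1)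
    also have "\<dots> \<le> (C * b ^ n * (real n + 1) ^ d + 1) * real (t choose k)"
      using r by (intro mult_right_mono) auto
    finally show ?thesis unfolding t_def .
  qed
  show False
  proof (cases "b \<le> 0")
    case True
    define t1 where "t1 = nat \<lfloor>\<alpha> * real (1::nat)\<rfloor>"
    define n where "n = 2 * (N + t1 + 1) + (if C > 0 then 1 else 0)"
    have nN: "n \<ge> N" and tn: "t1 < n" by (auto simp: n_def)
    have "C * b ^ n \<le> 0"
    proof (cases "C > 0")
      case True
      hence "odd n" by (simp add: n_def)
      hence "b ^ n \<le> 0" using \<open>b \<le> 0\<close> by (simp add: power_le_zero_eq odd_pos)
      thus ?thesis using True by (simp add: mult_nonneg_nonpos)
    next
      case False
      hence "even n" by (simp add: n_def)
      hence "b ^ n \<ge> 0" by (simp add: zero_le_even_power)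
      thus ?thesis using False by (simp add: mult_nonpos_nonneg)
    qed
    hence X: "C * b ^ n * (real n + 1) ^ d \<le> 0" by (simp add: mult_nonpos_nonneg)
    have "real n \<le> (C * b ^ n * (real n + 1) ^ d + 1) * real t1"
      using key[OF nN, of 1] tn by (simp add: t1_def)
    also have "\<dots> \<le> 1 * real t1" using X by (intro mult_right_mono) auto
    finally show False using tn by simp
  next
    case False
    hence bpos: "b > 0" by simp
    define \<beta> where "\<beta> = max b 1"
    have bb: "1 \<le> \<beta>" "b \<le> \<beta>" by (auto simp: \<beta>_def)
    have "\<beta> < brute \<alpha>" unfolding \<beta>_def b_def using assms by (auto simp: brute_def)
    then obtain p q :: nat where pq: "0 < p" "p < q" "\<alpha> * real p < real q"
      and L: "ln \<beta> < entropy (real p / real q) - \<alpha> * entropy (1 / \<alpha>) * (real p / real q)"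
      using choose_x[OF assms(1), of \<beta>] bb by auto
    define c where "c = \<alpha> * entropy (1 / \<alpha>)"
    define D where "D = entropy (real p / real q) - c * (real p / real q) - ln \<beta>"
    have D: "D > 0" using L by (simp add: D_def c_def)
    define K where "K = \<bar>C\<bar> + 1"
    obtain X where X: "\<And>x. x \<ge> X \<Longrightarrow> K * (x + 1) ^ (d + 1) < exp (D * x)"
      using exp_beats_poly[OF D, of K "d + 1"] by blast
    define m where "m = nat \<lceil>X\<rceil> + N + 1"
    define n where "n = q * m"
    define k where "k = p * m"
    have m1: "m \<ge> 1" "m \<ge> N" by (auto simp: m_def)
    have nm: "n \<ge> m" using pq by (simp add: n_def)
    have nN: "n \<ge> N" using nm m1 by simp
    have nX: "real n \<ge> X"
    proof -
      have "X \<le> real (nat \<lceil>X\<rceil>)" by linarith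
      also have "\<dots> \<le> real n"
      proof -
        have "nat \<lceil>X\<rceil> \<le> n" using nm unfolding m_def by linarith
        thus ?thesis by (simp only: of_nat_le_iff)
      qed
      finally show ?thesis .
    qed
    have kpos: "0 < k" and kn: "k < n" using pq m1 by (auto simp: k_def n_def)
    have kn_real: "real k = real n * (real p / real q)" using pq by (simp add: k_def n_def)
    define t where "t = nat \<lfloor>\<alpha> * real k\<rfloor>"
    have akn: "\<alpha> * real k < real n"
    proof -
      have "\<alpha> * real k = (\<alpha> * real p) * real m" by (simp add: k_def)
      also have "\<dots> < real q * real m" using pq m1 by (intro mult_strict_right_mono) auto
      finally show ?thesis by (simp add: n_def)
    qed
    have tle: "real t \<le> \<alpha> * real k" unfolding t_def using assms by simp
    have tn: "t < n" using tle akn by linarith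
    have kt: "k \<le> t" unfolding t_def by (rule kt0)
    have up: "real (t choose k) \<le> exp (c * real k)"
      unfolding c_def by (rule entropy_upper[OF assms(1) kt tle])
    have low: "exp (real n * entropy (real p / real q)) \<le> real (n + 1) * real (n choose k)"
    proof -
      have "real k / real n = real p / real q" using kn_real kn by simp
      thus ?thesis using entropy_lower[OF kpos kn] by simp
    qed
    have bn: "C * b ^ n * (real n + 1) ^ d + 1 \<le> K * \<beta> ^ n * (real n + 1) ^ d"
    proof -
      have p1: "(real n + 1) ^ d \<ge> 1" by simp
      have b1: "\<beta> ^ n \<ge> 1" using bb by simp
      have "C * b ^ n \<le> \<bar>C\<bar> * \<beta> ^ n"
      proof -
        have "C * b ^ n \<le> \<bar>C\<bar> * b ^ n" using bpos by (intro mult_right_mono) auto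
        also have "\<dots> \<le> \<bar>C\<bar> * \<beta> ^ n" using bpos bb by (intro mult_left_mono power_mono) auto
        finally show ?thesis .
      qed
      hence f1: "C * b ^ n * (real n + 1) ^ d \<le> \<bar>C\<bar> * \<beta> ^ n * (real n + 1) ^ d"
        by (intro mult_right_mono) auto
      have f2: "1 \<le> \<beta> ^ n * (real n + 1) ^ d" using p1 b1
        by (metis le_numeral_extra(4) mult_mono one_le_power order_trans zero_le_one mult_1)
      have "K * \<beta> ^ n * (real n + 1) ^ d = \<bar>C\<bar> * \<beta> ^ n * (real n + 1) ^ d + \<beta> ^ n * (real n + 1) ^ d"
        unfolding K_def by (simp add: algebra_simps)
      thus ?thesis using f1 f2 by linarith
    qed
    have "exp (real n * entropy (real p / real q)) \<le> real (n + 1) * ((C * b ^ n * (real n + 1) ^ d + 1) * real (t choose k))"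
    proof -
      have "real (n + 1) * real (n choose k) \<le> real (n + 1) * ((C * b ^ n * (real n + 1) ^ d + 1) * real (t choose k))"
        using key[OF nN tn[unfolded t_def]] unfolding t_def by (intro mult_left_mono) auto
      thus ?thesis using low by linarith
    qed
    also have "\<dots> \<le> real (n + 1) * ((K * \<beta> ^ n * (real n + 1) ^ d) * exp (c * real k))"
    proof -
      have Kp: "0 \<le> K * \<beta> ^ n * (real n + 1) ^ d" using bb by (intro mult_nonneg_nonneg) (auto simp: K_def)
      show ?thesis using bn up Kp by (intro mult_left_mono mult_mono) auto
    qed
    also have "\<dots> = K * (real n + 1) ^ (d + 1) * exp (real n * ln \<beta>) * exp (c * real k)"
      using bb by (simp add: exp_of_nat_mult algebra_simps)
    finally have E: "exp (real n * entropy (real p / real q)) \<le>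
        K * (real n + 1) ^ (d + 1) * exp (real n * ln \<beta>) * exp (c * real k)" .
    have "exp (real n * entropy (real p / real q)) = exp (D * real n) * exp (real n * ln \<beta>) * exp (c * real k)"
    proof -
      have "D * real n + real n * ln \<beta> + c * real k = real n * entropy (real p / real q)"
        unfolding D_def kn_real by (simp add: algebra_simps)
      thus ?thesis by (metis exp_add)
    qed
    with E have "exp (D * real n) \<le> K * (real n + 1) ^ (d + 1)" by simp
    with X[OF nX] show False by simp
  qed
qed


end
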